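(* There is a constant $c>0$ such that for every $n\in\mathbb{N}$ that is a multiple of $7$, $\mathrm{fw}(\mathrm{HWB}_n)\ge 2^{cn}$. In particular, every TDD computing $\mathrm{HWB}_n$ has size at least $2^{cn}$.
   Context: $\mathrm{HWB}_n$ is the Boolean function over $x_1,\dots,x_n$ with $\mathrm{HWB}_n(x_1,\dots,x_n)=1$ iff $x_S=1$ where $S=\sum_{i=1}^n x_i$ (when $S=0$ the value is $0$). A vtree over $X$ is a rooted tree whose internal nodes have exactly two ordered children and whose leaves are labeled bijectively by $X$; $X_t$ is the set of variables below node $t$. For a Boolean function $f$ over $X$, $Y\subseteq X$ and $\tau\in 2^Y$, $f[\tau]$ is the function over $X\setminus Y$ mapping $\sigma$ to $f(\sigma\times\tau)$; $S_t$ is the number of distinct non-trivial (having a model) functions $f[\tau]$ with $\tau\in 2^{X_t}$; $\mathrm{fw}(f)[T]=\max_t S_t$ and $\mathrm{fw}(f)=\min_T \mathrm{fw}(f)[T]$ over all vtrees $T$ over $X$. An nTDD $C=(N,E)$ respecting $T$ has nodes $N=\biguplus_t N_t$ ($t$-nodes); leaf $t$-nodes (leaf labeled $x$) carry a label in $\{x,\neg x,1,0\}$ and compute that literal/constant; an internal $t$-node $g$ with children $t_1,t_2$ has inputs $E(g)\subseteq N_{t_1}\times N_{t_2}$ and computes $f_g=\bigvee_{(g_1,g_2)\in E(g)}(f_{g_1}\wedge f_{g_2})$ over $X_t$; the root-node $\mathrm{out}$ gives the computed function. Size $|C|=\sum_g|E(g)|$. A TDD is an nTDD (respecting some vtree)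 such that for every leaf $t$ labeled $x$, $N_t$ has at most one node labeled $x$, at most one labeled $\neg x$, at most one labeled $1$, and if one is labeled $1$ all others are labeled $0$; and for every internal $t$, distinct $t$-nodes have disjoint input sets. *)

theory Defs
  imports Complex_Main
begin

text \<open>An assignment to a variable set V is a total map that is False outside V
  (canonical representative of an element of 2^V). A Boolean function over X is
  a predicate on assignments, only ever evaluated on assignments to X.\<close>

definition asg :: "'v set \<Rightarrow> ('v \<Rightarrow> bool) set" where
  "asg V = {a. \<forall>v. v \<notin> V \<longrightarrow> a v = False}"

definition merge :: "'v set \<Rightarrow> ('v \<Rightarrow> bool) \<Rightarrow> ('v \<Rightarrow> bool) \<Rightarrow> ('v \<Rightarrow> bool)" where
  "merge Y \<sigma> \<tau> = (\<lambda>v. if v \<in> Y then \<tau> v else \<sigma> v)"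

definition subfun :: "(('v \<Rightarrow> bool) \<Rightarrow> bool) \<Rightarrow> 'v set \<Rightarrow> 'v set \<Rightarrow> ('v \<Rightarrow> bool)
     \<Rightarrow> (('v \<Rightarrow> bool) \<Rightarrow> bool)" where
  "subfun f X Y \<tau> = (\<lambda>\<sigma>. \<sigma> \<in> asg (X - Y) \<and> f (merge Y \<sigma> \<tau>))"

definition nontrivial_subfuns :: "(('v \<Rightarrow> bool) \<Rightarrow> bool) \<Rightarrow> 'v set \<Rightarrow> 'v set
     \<Rightarrow> (('v \<Rightarrow> bool) \<Rightarrow> bool) set" where
  "nontrivial_subfuns f X Y =
     {subfun f X Y \<tau> | \<tau>. \<tau> \<in> asg Y \<and> (\<exists>\<sigma>\<in>asg (X - Y). f (merge Y \<sigma> \<tau>))}"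

datatype 'v vtree = Leaf 'v | Node "'v vtree" "'v vtree"

primrec vars :: "'v vtree \<Rightarrow> 'v set" where
  "vars (Leaf x) = {x}"
| "vars (Node l r) = vars l \<union> vars r"

primrec distinct_leaves :: "'v vtree \<Rightarrow> bool" where
  "distinct_leaves (Leaf x) = True"
| "distinct_leaves (Node l r) =
     (distinct_leaves l \<and> distinct_leaves r \<and> vars l \<inter> vars r = {})"

text \<open>Nodes of a vtree, identified with the subtrees rooted at them
  (distinct for vtrees with bijectively labelled leaves).\<close>
primrec subtrees :: "'v vtree \<Rightarrow> 'v vtree set" where
  "subtrees (Leaf x) = {Leaf x}"
| "subtrees (Node l r) = insert (Node l r) (subtrees l \<union> subtrees r)"

definition vtree_over :: "'v vtree \<Rightarrow> 'v set \<Rightarrow> bool" where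
  "vtree_over T X \<longleftrightarrow> vars T = X \<and> distinct_leaves T"

definition S_t :: "(('v \<Rightarrow> bool) \<Rightarrow> bool) \<Rightarrow> 'v set \<Rightarrow> 'v vtree \<Rightarrow> nat" where
  "S_t f X t = card (nontrivial_subfuns f X (vars t))"

definition fw_T :: "(('v \<Rightarrow> bool) \<Rightarrow> bool) \<Rightarrow> 'v set \<Rightarrow> 'v vtree \<Rightarrow> nat" where
  "fw_T f X T = Max ((\<lambda>t. S_t f X t) ` subtrees T)"

definition fw :: "(('v \<Rightarrow> bool) \<Rightarrow> bool) \<Rightarrow> 'v set \<Rightarrow> nat" where
  "fw f X = (INF T \<in> {T. vtree_over T X}. fw_T f X T)"

definition HWB :: "nat \<Rightarrow> (nat \<Rightarrow> bool) \<Rightarrow> bool" where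
  "HWB n a = (let S = card {i \<in> {1..n}. a i} in 0 < S \<and> a S)"

datatype lbl = LPos | LNeg | LOne | LZero

text \<open>Nodes are of type 'g; tnode g is the vtree node t with g a t-node; lab is the
  label of leaf t-nodes (ignored for internal ones); inp g = E(g).\<close>
record ('v, 'g) ntdd =
  nodes :: "'g set"
  tnode :: "'g \<Rightarrow> 'v vtree"
  lab :: "'g \<Rightarrow> lbl"
  inp :: "'g \<Rightarrow> ('g \<times> 'g) set"
  out :: 'g

definition tnodes :: "('v, 'g) ntdd \<Rightarrow> 'v vtree \<Rightarrow> 'g set" where
  "tnodes C t = {g \<in> nodes C. tnode C g = t}"

definition is_nTDD :: "'v vtree \<Rightarrow> ('v, 'g) ntdd \<Rightarrow> bool" where
  "is_nTDD T C \<longleftrightarrow>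
     finite (nodes C) \<and>
     (\<forall>g \<in> nodes C. tnode C g \<in> subtrees T) \<and>
     (\<forall>g \<in> nodes C. \<forall>x. tnode C g = Leaf x \<longrightarrow> inp C g = {}) \<and>
     (\<forall>g \<in> nodes C. \<forall>t1 t2. tnode C g = Node t1 t2 \<longrightarrow>
         inp C g \<subseteq> tnodes C t1 \<times> tnodes C t2) \<and>
     out C \<in> nodes C \<and> tnode C (out C) = T"

definition is_TDD :: "'v vtree \<Rightarrow> ('v, 'g) ntdd \<Rightarrow> bool" where
  "is_TDD T C \<longleftrightarrow> is_nTDD T C \<and>
     (\<forall>x. Leaf x \<in> subtrees T \<longrightarrow>
        card {g \<in> tnodes C (Leaf x). lab C g = LPos} \<le> 1 \<and>
        card {g \<in> tnodes C (Leaf x). lab C g = LNeg} \<le> 1 \<and>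
        card {g \<in> tnodes C (Leaf x). lab C g = LOne} \<le> 1 \<and>
        ((\<exists>g \<in> tnodes C (Leaf x). lab C g = LOne) \<longrightarrow>
           (\<forall>g \<in> tnodes C (Leaf x). lab C g \<noteq> LOne \<longrightarrow> lab C g = LZero))) \<and>
     (\<forall>t1 t2. Node t1 t2 \<in> subtrees T \<longrightarrow>
        (\<forall>g1 \<in> tnodes C (Node t1 t2). \<forall>g2 \<in> tnodes C (Node t1 t2).
           g1 \<noteq> g2 \<longrightarrow> inp C g1 \<inter> inp C g2 = {}))"

primrec eval :: "'v vtree \<Rightarrow> ('v, 'g) ntdd \<Rightarrow> 'g \<Rightarrow> ('v \<Rightarrow> bool) \<Rightarrow> bool" where
  "eval (Leaf x) C g a =
     (case lab C g of LPos \<Rightarrow> a x | LNeg \<Rightarrow> \<not> a x | LOne \<Rightarrow> True | LZero \<Rightarrow> False)"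
| "eval (Node l r) C g a =
     (\<exists>(g1, g2) \<in> inp C g. eval l C g1 a \<and> eval r C g2 a)"

definition computes :: "'v vtree \<Rightarrow> ('v, 'g) ntdd \<Rightarrow> (('v \<Rightarrow> bool) \<Rightarrow> bool) \<Rightarrow> 'v set \<Rightarrow> bool" where
  "computes T C f X \<longleftrightarrow> (\<forall>a \<in> asg X. eval T C (out C) a = f a)"

definition tdd_size :: "('v, 'g) ntdd \<Rightarrow> nat" where
  "tdd_size C = (\<Sum>g \<in> nodes C. card (inp C g))"

end

theory Submission
  imports Defs
begin


lemma finite_vars[simp]: "finite (vars t)"
  by (induct t) auto

lemma subtrees_self[simp]: "t \<in> subtrees t"
  by (cases t) auto

lemma subtrees_trans: "s \<in> subtrees t \<Longrightarrow> subtrees s \<subseteq> subtrees t"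
  by (induct t) auto

lemma subtrees_vars: "s \<in> subtrees t \<Longrightarrow> vars s \<subseteq> vars t"
  by (induct t) auto

lemma subtrees_distinct: "s \<in> subtrees t \<Longrightarrow> distinct_leaves t \<Longrightarrow> distinct_leaves s"
  by (induct t) auto

lemma finite_subtrees: "finite (subtrees t)"
  by (induct t) auto

lemma eval_local:
  "(\<And>v. v \<in> vars s \<Longrightarrow> a v = b v) \<Longrightarrow> eval s C h a = eval s C h b"
proof (induct s arbitrary: h)
  case (Leaf x) then show ?case by (simp split: lbl.split)
next
  case (Node l r)
  have "\<And>g. eval l C g a = eval l C g b" using Node by auto
  moreover have "\<And>g. eval r C g a = eval r C g b" using Node by auto
  ultimately show ?case by simp
qed

lemma eval_path:
  assumes "is_nTDD T C"
  shows "h \<in> nodes C \<Longrightarrow> tnode C h = s \<Longrightarrow> t \<in> subtrees s \<Longrightarrow> eval s C h a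
    \<Longrightarrow> \<exists>g \<in> tnodes C t. eval t C g a"
proof (induct s arbitrary: h)
  case (Leaf x)
  then show ?case by (auto simp: tnodes_def)
next
  case (Node l r)
  show ?case
  proof (cases "t = Node l r")
    case True then show ?thesis using Node by (auto simp: tnodes_def)
  next
    case False
    from Node.prems obtain g1 g2 where gg: "(g1,g2) \<in> inp C h" "eval l C g1 a" "eval r C g2 a"
      by auto
    have "inp C h \<subseteq> tnodes C l \<times> tnodes C r"
      using assms Node.prems unfolding is_nTDD_def by blast
    then have "g1 \<in> tnodes C l" "g2 \<in> tnodes C r" using gg by auto
    then show ?thesis using Node False gg by (auto simp: tnodes_def)
  qed
qed

lemma eval_replace:
  assumes "is_nTDD T C"
    and agree: "\<And>v. v \<notin> vars t \<Longrightarrow> a v = b v"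
    and tn: "\<And>g. g \<in> tnodes C t \<Longrightarrow> eval t C g a = eval t C g b"
  shows "distinct_leaves s \<Longrightarrow> h \<in> nodes C \<Longrightarrow> tnode C h = s
    \<Longrightarrow> t \<in> subtrees s \<or> vars s \<inter> vars t = {} \<Longrightarrow> eval s C h a = eval s C h b"
proof (induct s arbitrary: h)
  case (Leaf x)
  show ?case
  proof (cases "t = Leaf x")
    case True then show ?thesis using Leaf tn by (auto simp: tnodes_def)
  next
    case False
    then have "vars (Leaf x) \<inter> vars t = {}" using Leaf by auto
    then show ?thesis by (intro eval_local) (use agree in auto)
  qed
next
  case (Node l r)
  show ?case
  proof (cases "t = Node l r")
    case True then show ?thesis using Node tn by (auto simp: tnodes_def)
  next
    case False
    have sub: "inp C h \<subseteq> tnodes C l \<times> tnodes C r"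
      using assms(1) Node.prems unfolding is_nTDD_def by blast
    have cl: "t \<in> subtrees l \<or> vars l \<inter> vars t = {}"
      using Node.prems False subtrees_vars[of t r] by auto
    have cr: "t \<in> subtrees r \<or> vars r \<inter> vars t = {}"
      using Node.prems False subtrees_vars[of t l] by auto
    have "\<And>g. g \<in> tnodes C l \<Longrightarrow> eval l C g a = eval l C g b"
      using Node.hyps(1) Node.prems cl by (auto simp: tnodes_def)
    moreover have "\<And>g. g \<in> tnodes C r \<Longrightarrow> eval r C g a = eval r C g b"
      using Node.hyps(2) Node.prems cr by (auto simp: tnodes_def)
    ultimately have "\<And>g1 g2. (g1,g2) \<in> inp C h \<Longrightarrow>
        (eval l C g1 a \<and> eval r C g2 a) = (eval l C g1 b \<and> eval r C g2 b)"
      using sub by blast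
    then show ?thesis by (simp add: Bex_def) (smt (verit, best) case_prod_conv surj_pair)
  qed
qed

lemma eval_det:
  assumes "is_TDD T C"
  shows "s \<in> subtrees T \<Longrightarrow> g1 \<in> tnodes C s \<Longrightarrow> g2 \<in> tnodes C s \<Longrightarrow> g1 \<noteq> g2
    \<Longrightarrow> eval s C g1 a \<Longrightarrow> eval s C g2 a \<Longrightarrow> False"
proof (induct s arbitrary: g1 g2)
  case (Leaf x)
  have fin: "finite (tnodes C (Leaf x))"
    using assms unfolding is_TDD_def is_nTDD_def tnodes_def by auto
  have c: "card {g \<in> tnodes C (Leaf x). lab C g = LPos} \<le> 1"
      "card {g \<in> tnodes C (Leaf x). lab C g = LNeg} \<le> 1"
      "card {g \<in> tnodes C (Leaf x). lab C g = LOne} \<le> 1"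
      "(\<exists>g \<in> tnodes C (Leaf x). lab C g = LOne) \<longrightarrow>
           (\<forall>g \<in> tnodes C (Leaf x). lab C g \<noteq> LOne \<longrightarrow> lab C g = LZero)"
    using assms Leaf.prems(1) unfolding is_TDD_def by blast+
  have u: "\<And>P. card {g \<in> tnodes C (Leaf x). P g} \<le> 1 \<Longrightarrow> P g1 \<Longrightarrow> P g2 \<Longrightarrow> False"
  proof -
    fix P assume "card {g \<in> tnodes C (Leaf x). P g} \<le> 1" "P g1" "P g2"
    moreover have "finite {g \<in> tnodes C (Leaf x). P g}" using fin by auto
    moreover have "{g1, g2} \<subseteq> {g \<in> tnodes C (Leaf x). P g}" using Leaf.prems \<open>P g1\<close> \<open>P g2\<close> by auto
    ultimately have "card {g1,g2} \<le> 1" by (meson card_mono order_trans)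
    then show False using Leaf.prems by auto
  qed
  show ?case
    using Leaf.prems c u[of "\<lambda>g. lab C g = LPos"] u[of "\<lambda>g. lab C g = LNeg"] u[of "\<lambda>g. lab C g = LOne"]
    by (cases "lab C g1"; cases "lab C g2"; auto)
next
  case (Node l r)
  from Node.prems obtain p1 p2 where p: "(p1,p2) \<in> inp C g1" "eval l C p1 a" "eval r C p2 a" by auto
  from Node.prems obtain q1 q2 where q: "(q1,q2) \<in> inp C g2" "eval l C q1 a" "eval r C q2 a" by auto
  have sub: "\<And>g. g \<in> tnodes C (Node l r) \<Longrightarrow> inp C g \<subseteq> tnodes C l \<times> tnodes C r"
    using assms unfolding is_TDD_def is_nTDD_def tnodes_def by blast
  have lT: "l \<in> subtrees T" "r \<in> subtrees T" using subtrees_trans[OF Node.prems(1)] by auto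
  have "p1 = q1" using Node.hyps(1)[OF lT(1), of p1 q1] p q sub Node.prems by blast
  moreover have "p2 = q2" using Node.hyps(2)[OF lT(2), of p2 q2] p q sub Node.prems by blast
  moreover have "inp C g1 \<inter> inp C g2 = {}"
    using assms Node.prems unfolding is_TDD_def by blast
  ultimately show False using p q by auto
qed



lemma merge_asg: "Y \<subseteq> X \<Longrightarrow> \<sigma> \<in> asg (X - Y) \<Longrightarrow> \<tau> \<in> asg Y \<Longrightarrow> merge Y \<sigma> \<tau> \<in> asg X"
  by (auto simp: asg_def merge_def)

lemma tdd_bound:
  assumes TDD: "is_TDD T C" and vt: "vtree_over T X" and comp: "computes T C f X"
    and tT: "t \<in> subtrees T" and tN: "t = Node t1 t2"
  shows "S_t f X t \<le> tdd_size C"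
proof -
  define Y where "Y = vars t"
  have nT: "is_nTDD T C" using TDD unfolding is_TDD_def by auto
  have YX: "Y \<subseteq> X" using subtrees_vars[OF tT] vt unfolding vtree_over_def Y_def by auto
  have dT: "distinct_leaves T" using vt unfolding vtree_over_def by auto
  have finN: "finite (nodes C)" using nT unfolding is_nTDD_def by auto
  define G where "G = {g \<in> tnodes C t. inp C g \<noteq> {}}"
  have GN: "G \<subseteq> nodes C" unfolding G_def tnodes_def by auto
  have fininp: "\<And>g. g \<in> G \<Longrightarrow> finite (inp C g)"
  proof -
    fix g assume "g \<in> G"
    then have "inp C g \<subseteq> tnodes C t1 \<times> tnodes C t2"
      using nT tN unfolding G_def tnodes_def is_nTDD_def by blast
    moreover have "finite (tnodes C t1 \<times> tnodes C t2)" using finN unfolding tnodes_def by auto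
    ultimately show "finite (inp C g)" by (rule finite_subset)
  qed
  define \<Psi> where "\<Psi> g = subfun f X Y (SOME \<tau>. \<tau> \<in> asg Y \<and> eval t C g \<tau>)" for g
  have key: "nontrivial_subfuns f X Y \<subseteq> \<Psi> ` G"
  proof
    fix \<phi> assume "\<phi> \<in> nontrivial_subfuns f X Y"
    then obtain \<tau> \<sigma> where \<phi>: "\<phi> = subfun f X Y \<tau>" and \<tau>: "\<tau> \<in> asg Y"
      and \<sigma>: "\<sigma> \<in> asg (X - Y)" and fs: "f (merge Y \<sigma> \<tau>)"
      unfolding nontrivial_subfuns_def by auto
    have ma: "merge Y \<sigma> \<tau> \<in> asg X" using merge_asg[OF YX \<sigma> \<tau>] .
    then have "eval T C (out C) (merge Y \<sigma> \<tau>)" using comp fs unfolding computes_def by auto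
    then obtain g where g: "g \<in> tnodes C t" "eval t C g (merge Y \<sigma> \<tau>)"
      using eval_path[OF nT, of "out C" T t] nT tT unfolding is_nTDD_def by blast
    have gt: "eval t C g \<tau>"
      using g(2) eval_local[of t "merge Y \<sigma> \<tau>" \<tau> C g] by (auto simp: merge_def Y_def)
    then have gG: "g \<in> G" using g tN unfolding G_def by auto
    define \<tau>0 where "\<tau>0 = (SOME \<tau>. \<tau> \<in> asg Y \<and> eval t C g \<tau>)"
    have \<tau>0: "\<tau>0 \<in> asg Y \<and> eval t C g \<tau>0"
      unfolding \<tau>0_def by (rule someI[of _ \<tau>]) (use \<tau> gt in auto)
    have same: "\<And>g'. g' \<in> tnodes C t \<Longrightarrow> eval t C g' \<tau> = eval t C g' \<tau>0"
    proof -
      fix g' assume g': "g' \<in> tnodes C t"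
      show "eval t C g' \<tau> = eval t C g' \<tau>0"
      proof (cases "g' = g")
        case True then show ?thesis using gt \<tau>0 by auto
      next
        case False
        then show ?thesis using eval_det[OF TDD tT g' g(1) False, of \<tau>]
            eval_det[OF TDD tT g' g(1) False, of \<tau>0] gt \<tau>0 by auto
      qed
    qed
    have "subfun f X Y \<tau> = subfun f X Y \<tau>0"
    proof
      fix s
      show "subfun f X Y \<tau> s = subfun f X Y \<tau>0 s"
      proof (cases "s \<in> asg (X - Y)")
        case False then show ?thesis unfolding subfun_def by auto
      next
        case True
        have m1: "merge Y s \<tau> \<in> asg X" by (rule merge_asg[OF YX True \<tau>])
        have m2: "merge Y s \<tau>0 \<in> asg X" by (rule merge_asg[OF YX True]) (use \<tau>0 in auto)
        have "eval T C (out C) (merge Y s \<tau>) = eval T C (out C) (merge Y s \<tau>0)"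
        proof (rule eval_replace[OF nT])
          show "\<And>v. v \<notin> vars t \<Longrightarrow> merge Y s \<tau> v = merge Y s \<tau>0 v"
            by (auto simp: merge_def Y_def)
          show "\<And>g. g \<in> tnodes C t \<Longrightarrow> eval t C g (merge Y s \<tau>) = eval t C g (merge Y s \<tau>0)"
          proof -
            fix g' assume "g' \<in> tnodes C t"
            have "eval t C g' (merge Y s \<tau>) = eval t C g' \<tau>"
              by (rule eval_local) (auto simp: merge_def Y_def)
            also have "\<dots> = eval t C g' \<tau>0" using same \<open>g' \<in> tnodes C t\<close> by auto
            also have "\<dots> = eval t C g' (merge Y s \<tau>0)"
              by (rule eval_local) (auto simp: merge_def Y_def)
            finally show "eval t C g' (merge Y s \<tau>) = eval t C g' (merge Y s \<tau>0)" .
          qed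
          show "distinct_leaves T" by (rule dT)
          show "out C \<in> nodes C" "tnode C (out C) = T" using nT unfolding is_nTDD_def by auto
          show "t \<in> subtrees T \<or> vars T \<inter> vars t = {}" using tT by auto
        qed
        then show ?thesis using comp m1 m2 True unfolding subfun_def computes_def by auto
      qed
    qed
    then show "\<phi> \<in> \<Psi> ` G" using \<phi> gG unfolding \<Psi>_def \<tau>0_def by auto
  qed
  have finG: "finite G" using GN finN finite_subset by auto
  have "S_t f X t \<le> card (\<Psi> ` G)"
    unfolding S_t_def Y_def[symmetric] using key finG by (intro card_mono) auto
  also have "\<dots> \<le> card G" by (rule card_image_le[OF finG])
  also have "\<dots> = (\<Sum>g\<in>G. 1)" by simp
  also have "\<dots> \<le> (\<Sum>g\<in>G. card (inp C g))"
  proof (rule sum_mono)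
    fix g assume "g \<in> G"
    then show "1 \<le> card (inp C g)" using fininp[of g] unfolding G_def
      by (simp add: Suc_le_eq card_gt_0_iff)
  qed
  also have "\<dots> \<le> (\<Sum>g\<in>nodes C. card (inp C g))"
    by (rule sum_mono2[OF finN GN]) auto
  finally show ?thesis unfolding tdd_size_def .
qed



lemma finite_asg: "finite Y \<Longrightarrow> finite (asg Y)"
proof -
  assume "finite Y"
  have "asg Y \<subseteq> (\<lambda>S v. v \<in> S) ` Pow Y"
  proof
    fix a assume "a \<in> asg Y"
    then have "a = (\<lambda>v. v \<in> {v \<in> Y. a v})" by (auto simp: asg_def)
    then show "a \<in> (\<lambda>S v. v \<in> S) ` Pow Y" by blast
  qed
  then show ?thesis using \<open>finite Y\<close> finite_subset by blast
qed

lemma finite_nontriv: "finite Y \<Longrightarrow> finite (nontrivial_subfuns f X Y)"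
proof -
  assume "finite Y"
  have "nontrivial_subfuns f X Y \<subseteq> subfun f X Y ` asg Y"
    unfolding nontrivial_subfuns_def by auto
  then show ?thesis using finite_asg[OF \<open>finite Y\<close>] finite_subset by blast
qed

lemma window_exists:
  fixes Y :: "nat set" and n d :: nat
  assumes Y: "Y \<subseteq> {1..n}" and d: "1 \<le> d" and m: "6*d \<le> card Y + 2" and L: "4*d \<le> n - card Y + 3"
  shows "\<exists>k. d \<le> k \<and> k + d \<le> card Y \<and> 2*d \<le> card (Y \<inter> {k..k + (n - card Y)})"
proof (rule ccontr)
  assume neg: "\<not> ?thesis"
  define m where "m = card Y"
  define L where "L = n - m"
  have fY: "finite Y" using Y finite_subset by blast
  have mn: "m \<le> n" using card_mono[OF _ Y] unfolding m_def by auto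
  have m2: "2*d \<le> m" using m d unfolding m_def by linarith
  have c1: "card (Y \<inter> {d..d+L}) < 2*d" using neg m2 unfolding m_def L_def
    using not_le[of "2*d"] by (metis le_add1 le_trans mult_2 order_refl add_le_mono)
  have c2: "card (Y \<inter> {m-d..m-d+L}) < 2*d"
  proof -
    have "m - d + d \<le> m" "d \<le> m - d" using m2 by auto
    then show ?thesis using neg unfolding m_def L_def using not_le by blast
  qed
  have cover: "Y \<subseteq> {1..<d} \<union> (Y \<inter> {d..d+L}) \<union> {d+L+1..<m-d} \<union> (Y \<inter> {m-d..m-d+L}) \<union> {m-d+L+1..n}"
    using Y by auto
  have "card Y \<le> card ({1..<d} \<union> (Y \<inter> {d..d+L}) \<union> {d+L+1..<m-d} \<union> (Y \<inter> {m-d..m-d+L}) \<union> {m-d+L+1..n})"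
    by (rule card_mono[OF _ cover]) (use fY in auto)
  then have "m \<le> card ({1..<d} \<union> (Y \<inter> {d..d+L}) \<union> {d+L+1..<m-d} \<union> (Y \<inter> {m-d..m-d+L}) \<union> {m-d+L+1..n})"
    unfolding m_def .
  also have "\<dots> \<le> card {1..<d} + card (Y \<inter> {d..d+L}) + card {d+L+1..<m-d} + card (Y \<inter> {m-d..m-d+L}) + card {m-d+L+1..n}"
    by (smt (verit) add_le_mono card_Un_le le_trans order_refl)
  finally have "m \<le> (d - 1) + card (Y \<inter> {d..d+L}) + (m - d - (d+L+1)) + card (Y \<inter> {m-d..m-d+L}) + (n + 1 - (m-d+L+1))"
    by simp
  then show False using c1 c2 m L m2 mn unfolding m_def[symmetric] L_def by linarith
qed



lemma many_subfuns:
  fixes Y :: "nat set" and n d :: nat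
  assumes Y: "Y \<subseteq> {1..n}" and d: "1 \<le> d" and m: "6*d \<le> card Y + 2" and L: "4*d \<le> n - card Y + 3"
  shows "2^d \<le> card (nontrivial_subfuns (HWB n) {1..n} Y)"
proof -
  define X where "X = {1..n::nat}"
  define Z where "Z = X - Y"
  have fY: "finite Y" using Y finite_subset by blast
  have cZ: "card Z = n - card Y" unfolding Z_def X_def using Y fY by (simp add: card_Diff_subset)
  obtain k where k: "d \<le> k" "k + d \<le> card Y" "2*d \<le> card (Y \<inter> {k..k + (n - card Y)})"
    using window_exists[OF Y d m L] by blast
  obtain R where R: "R \<subseteq> Y \<inter> {k..k + (n - card Y)}" "card R = 2*d" "finite R"
    using obtain_subset_with_card_n[OF k(3)] by blast
  have "k - d \<le> card (Y - R)" using R k fY by (simp add: card_Diff_subset)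
  then obtain Bs where Bs: "Bs \<subseteq> Y - R" "card Bs = k - d" "finite Bs"
    using obtain_subset_with_card_n by blast
  define F where "F = {r. r \<subseteq> R \<and> card r = d}"
  define \<tau> where "\<tau> r = (\<lambda>v::nat. v \<in> Bs \<union> r)" for r
  define \<Phi> where "\<Phi> r = subfun (HWB n) X Y (\<tau> r)" for r
  have wit: "\<exists>\<sigma> \<in> asg (X - Y). \<forall>r \<in> F. HWB n (merge Y \<sigma> (\<tau> r)) = (p \<in> r)" if p: "p \<in> R" for p
  proof -
    have pin: "p \<in> {k..k + (n - card Y)}" using p R by auto
    then have pk: "k \<le> p" "p - k \<le> card Z" using cZ by auto
    obtain Zs where Zs: "Zs \<subseteq> Z" "card Zs = p - k" "finite Zs"
      using obtain_subset_with_card_n[OF pk(2)] by blast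
    define \<sigma> where "\<sigma> = (\<lambda>v. v \<in> Zs)"
    have \<sigma>: "\<sigma> \<in> asg (X - Y)" using Zs unfolding \<sigma>_def asg_def Z_def by auto
    have "\<forall>r \<in> F. HWB n (merge Y \<sigma> (\<tau> r)) = (p \<in> r)"
    proof
      fix r assume r: "r \<in> F"
      have rR: "r \<subseteq> R" "card r = d" using r unfolding F_def by auto
      have fr: "finite r" using rR R finite_subset by blast
      have eq: "{i \<in> {1..n}. merge Y \<sigma> (\<tau> r) i} = (Bs \<union> r) \<union> Zs"
        using Bs rR R Zs Y unfolding merge_def \<tau>_def \<sigma>_def Z_def X_def by auto
      have d1: "Bs \<inter> r = {}" using Bs rR by auto
      have d2: "(Bs \<union> r) \<inter> Zs = {}" using Bs rR R Zs unfolding Z_def by auto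
      have "card ((Bs \<union> r) \<union> Zs) = card Bs + card r + card Zs"
        using card_Un_disjoint[OF _ _ d1] card_Un_disjoint[OF _ _ d2] Bs fr Zs by simp
      also have "\<dots> = p" using Bs rR Zs pk k by simp
      finally have cp: "card {i \<in> {1..n}. merge Y \<sigma> (\<tau> r) i} = p" using eq by simp
      have pY: "p \<in> Y" "p \<notin> Bs" using p R Bs by auto
      have "merge Y \<sigma> (\<tau> r) p = (p \<in> r)" using pY unfolding merge_def \<tau>_def by auto
      moreover have "0 < p" using pk k d by linarith
      ultimately show "HWB n (merge Y \<sigma> (\<tau> r)) = (p \<in> r)" unfolding HWB_def Let_def cp by simp
    qed
    then show ?thesis using \<sigma> by blast
  qed
  have sub: "\<Phi> ` F \<subseteq> nontrivial_subfuns (HWB n) X Y"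
  proof
    fix \<phi> assume "\<phi> \<in> \<Phi> ` F"
    then obtain r where r: "r \<in> F" "\<phi> = \<Phi> r" by auto
    have "r \<noteq> {}" using r d unfolding F_def by auto
    then obtain p where p: "p \<in> r" by auto
    then have pR: "p \<in> R" using r unfolding F_def by auto
    obtain \<sigma> where "\<sigma> \<in> asg (X - Y)" "HWB n (merge Y \<sigma> (\<tau> r)) = (p \<in> r)"
      using wit[OF pR] r by blast
    moreover have "\<tau> r \<in> asg Y" using Bs r R unfolding F_def asg_def \<tau>_def by auto
    ultimately show "\<phi> \<in> nontrivial_subfuns (HWB n) X Y"
      using r p unfolding nontrivial_subfuns_def \<Phi>_def by blast
  qed
  have inj: "inj_on \<Phi> F"
  proof
    fix r r' assume r: "r \<in> F" and r': "r' \<in> F" and eq: "\<Phi> r = \<Phi> r'"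
    show "r = r'"
    proof (rule ccontr)
      assume ne: "r \<noteq> r'"
      have fin: "finite r" "finite r'" using r r' R finite_subset unfolding F_def by blast+
      have "\<exists>p. (p \<in> r \<and> p \<notin> r') \<or> (p \<in> r' \<and> p \<notin> r)"
      proof (rule ccontr)
        assume "\<not> ?thesis"
        then have "r = r'" by blast
        then show False using ne by simp
      qed
      then obtain p where p: "(p \<in> r \<and> p \<notin> r') \<or> (p \<in> r' \<and> p \<notin> r)" by blast
      then have pR: "p \<in> R" using r r' unfolding F_def by auto
      obtain \<sigma> where \<sigma>: "\<sigma> \<in> asg (X - Y)" "\<forall>r \<in> F. HWB n (merge Y \<sigma> (\<tau> r)) = (p \<in> r)"
        using wit[OF pR] by blast
      have "\<Phi> r \<sigma> = (p \<in> r)" "\<Phi> r' \<sigma> = (p \<in> r')"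
        using \<sigma> r r' unfolding \<Phi>_def subfun_def by auto
      then show False using eq p by auto
    qed
  qed
  have "card F = (2*d) choose d" unfolding F_def using n_subsets[OF R(3)] R(2) by simp
  moreover have "(2::nat)^d \<le> (2*d) choose d"
  proof -
    have "(real (2*d) / real d) ^ d \<le> real ((2*d) choose d)"
      by (rule binomial_ge_n_over_k_pow_k) simp
    moreover have "real (2*d) / real d = 2" using d by simp
    ultimately have "real (2^d) \<le> real ((2*d) choose d)" by simp
    then show ?thesis by linarith
  qed
  moreover have "card (\<Phi> ` F) = card F" by (rule card_image[OF inj])
  moreover have "card (\<Phi> ` F) \<le> card (nontrivial_subfuns (HWB n) X Y)"
    by (rule card_mono[OF finite_nontriv[OF fY] sub])
  ultimately show ?thesis unfolding X_def by linarith
qed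



lemma vars_ne: "vars t \<noteq> {}"
  by (induct t) auto

lemma card_vars_Node: "distinct_leaves (Node l r) \<Longrightarrow> card (vars (Node l r)) = card (vars l) + card (vars r)"
  by (simp add: card_Un_disjoint)

lemma balanced:
  "distinct_leaves t \<Longrightarrow> 2 \<le> N \<Longrightarrow> 2*N < 3*card (vars t) \<Longrightarrow>
    \<exists>s\<in>subtrees t. N < 3*card (vars s) \<and> 3*card (vars s) \<le> 2*N"
proof (induct t)
  case (Leaf x) then show ?case by simp
next
  case (Node l r)
  have c: "card (vars (Node l r)) = card (vars l) + card (vars r)" using card_vars_Node Node.prems by blast
  show ?case
  proof (cases "card (vars r) \<le> card (vars l)")
    case True
    then have "N < 3 * card (vars l)" using c Node.prems by linarith
    then show ?thesis
    proof (cases "3 * card (vars l) \<le> 2*N")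
      case True then show ?thesis using \<open>N < 3 * card (vars l)\<close> by auto
    next
      case False then show ?thesis using Node by fastforce
    qed
  next
    case False
    then have "N < 3 * card (vars r)" using c Node.prems by linarith
    then show ?thesis
    proof (cases "3 * card (vars r) \<le> 2*N")
      case True then show ?thesis using \<open>N < 3 * card (vars r)\<close> by auto
    next
      case False then show ?thesis using Node by fastforce
    qed
  qed
qed

lemma not_leaf: "2 \<le> card (vars t) \<Longrightarrow> \<exists>t1 t2. t = Node t1 t2"
  by (cases t) auto

definition bnd :: "nat \<Rightarrow> nat" where
  "bnd n = (if 36 \<le> n then 2^(n div 18) else 2)"

lemma good_node:
  assumes vt: "vtree_over T {1..n}" and n7: "7 \<le> n"
  shows "\<exists>t\<in>subtrees T. (\<exists>t1 t2. t = Node t1 t2) \<and> bnd n \<le> S_t (HWB n) {1..n} t"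
proof -
  have vT: "vars T = {1..n}" and dT: "distinct_leaves T" using vt unfolding vtree_over_def by auto
  have cT: "card (vars T) = n" using vT by simp
  show ?thesis
  proof (cases "36 \<le> n")
    case True
    obtain s where s: "s \<in> subtrees T" "n < 3*card (vars s)" "3*card (vars s) \<le> 2*n"
      using balanced[OF dT, of n] cT n7 by auto
    define d where "d = n div 18"
    have d18: "18*d \<le> n" "n < 18*d + 18" unfolding d_def by auto
    have Ys: "vars s \<subseteq> {1..n}" using subtrees_vars[OF s(1)] vT by auto
    have "2^d \<le> card (nontrivial_subfuns (HWB n) {1..n} (vars s))"
      by (rule many_subfuns[OF Ys]) (use d18 s True in linarith)+
    moreover have "\<exists>t1 t2. s = Node t1 t2" by (rule not_leaf) (use s True in linarith)
    ultimately show ?thesis using s True unfolding bnd_def S_t_def d_def by auto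
  next
    case False
    obtain l r where T: "T = Node l r" using not_leaf[of T] cT n7 by auto
    have c: "card (vars l) + card (vars r) = n" using card_vars_Node[of l r] dT cT T by simp
    have ne: "1 \<le> card (vars l)" "1 \<le> card (vars r)" using vars_ne[of l] vars_ne[of r]
      by (simp_all add: Suc_le_eq card_gt_0_iff)
    have "\<exists>s\<in>subtrees T. 4 \<le> card (vars s) \<and> card (vars s) + 1 \<le> n"
    proof (cases "4 \<le> card (vars l)")
      case True then show ?thesis using T c ne by (intro bexI[of _ l]) auto
    next
      case False then show ?thesis using T c ne n7 by (intro bexI[of _ r]) auto
    qed
    then obtain s where s: "s \<in> subtrees T" "4 \<le> card (vars s)" "card (vars s) + 1 \<le> n" by blast
    have Ys: "vars s \<subseteq> {1..n}" using subtrees_vars[OF s(1)] vT by auto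
    have "2^1 \<le> card (nontrivial_subfuns (HWB n) {1..n} (vars s))"
      by (rule many_subfuns[OF Ys]) (use s in linarith)+
    moreover have "\<exists>t1 t2. s = Node t1 t2" by (rule not_leaf) (use s in linarith)
    ultimately show ?thesis using s False unfolding bnd_def S_t_def by auto
  qed
qed

primrec mk :: "nat \<Rightarrow> nat vtree" where
  "mk 0 = Leaf 1"
| "mk (Suc k) = Node (mk k) (Leaf (k+2))"

lemma mk_vars: "vars (mk k) = {1..k+1}"
  by (induct k) auto

lemma mk_over: "vtree_over (mk k) {1..k+1}"
  unfolding vtree_over_def by (induct k) (auto simp: mk_vars)

lemma bnd_real: "2 powr (1/36 * real n) \<le> real (bnd n)"
proof (cases "36 \<le> n")
  case True
  have "real n / 36 \<le> real (n div 18)"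
  proof -
    have "n < 18 * (n div 18) + 18" by auto
    then have "real n < 18 * real (n div 18) + 18" by linarith
    then show ?thesis using True by linarith
  qed
  then have "2 powr (1/36 * real n) \<le> 2 powr real (n div 18)" by (intro powr_mono) auto
  also have "\<dots> = 2^(n div 18)" by (simp add: powr_realpow)
  finally show ?thesis using True unfolding bnd_def by simp
next
  case False
  have "2 powr (1/36 * real n) \<le> 2 powr 1" using False by (intro powr_mono) auto
  then show ?thesis using False unfolding bnd_def by simp
qed

theorem theorem19:
  shows "\<exists>c::real. c > 0 \<and>
    (\<forall>n::nat. 0 < n \<and> 7 dvd n \<longrightarrow>
       2 powr (c * real n) \<le> real (fw (HWB n) {1..n}) \<and>
       (\<forall>(T :: nat vtree) (C :: (nat, nat) ntdd).
          vtree_over T {1..n} \<longrightarrow> is_TDD T C \<longrightarrow> computes T C (HWB n) {1..n} \<longrightarrow>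
          2 powr (c * real n) \<le> real (tdd_size C)))"
proof (intro exI[of _ "1/36"] conjI allI impI)
  fix n :: nat assume "0 < n \<and> 7 dvd n"
  then have n7: "7 \<le> n" by (auto elim!: dvdE)
  have fwT: "bnd n \<le> fw_T (HWB n) {1..n} T" if vt: "vtree_over T {1..n}" for T
  proof -
    obtain t where t: "t \<in> subtrees T" "bnd n \<le> S_t (HWB n) {1..n} t"
      using good_node[OF vt n7] by blast
    have "S_t (HWB n) {1..n} t \<le> fw_T (HWB n) {1..n} T"
      unfolding fw_T_def using t(1) finite_subtrees[of T] by (intro Max_ge) auto
    then show ?thesis using t by linarith
  qed
  have ne: "{T. vtree_over T {1..n}} \<noteq> {}"
  proof -
    have "n - 1 + 1 = n" using n7 by simp
    then have "vtree_over (mk (n - 1)) {1..n}" using mk_over[of "n - 1"] by simp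
    then show ?thesis by blast
  qed
  have "bnd n \<le> fw (HWB n) {1..n}"
    unfolding fw_def by (rule cINF_greatest[OF ne]) (use fwT in auto)
  then show "2 powr (1/36 * real n) \<le> real (fw (HWB n) {1..n})"
    using bnd_real[of n] by (meson of_nat_le_iff order_trans)
  fix T :: "nat vtree" and C :: "(nat, nat) ntdd"
  assume vt: "vtree_over T {1..n}" and TDD: "is_TDD T C" and comp: "computes T C (HWB n) {1..n}"
  obtain t t1 t2 where t: "t \<in> subtrees T" "t = Node t1 t2" "bnd n \<le> S_t (HWB n) {1..n} t"
    using good_node[OF vt n7] by blast
  have "bnd n \<le> tdd_size C" using tdd_bound[OF TDD vt comp t(1) t(2)] t(3) by linarith
  then show "2 powr (1/36 * real n) \<le> real (tdd_size C)"
    using bnd_real[of n] by (meson of_nat_le_iff order_trans)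
qed simp

end
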